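(* Let $m\in\mathbb N$ and $k_1\ge k_2\ge\dots\ge k_m\ge1$ be integers. Then $$\sum_{j_2=0}^{k_2}\cdots\sum_{j_m=0}^{k_m}A_{j_2:j_m}=\operatorname{card}\Pi_{k_1,\dots,k_m},$$ where $A_{j_2:j_m}=\prod_{l=2}^m\binom{k_l}{j_l}\cdot\frac{k_1!\,(k_1+j_2)!\cdots(k_1+\sum_{i=2}^{m-1}j_i)!}{(k_1+j_2-k_2)!\,(k_1+j_2+j_3-k_3)!\cdots(k_1+\sum_{i=2}^mj_i-k_m)!}$ (for $m=1$ the left side is interpreted as $1$).
   Context: For $k=k_1+\dots+k_m$, let $[k]=\{1,\dots,k\}$ and $\pi=\{J_1,\dots,J_m\}$ with $J_i=\{j:k_1+\dots+k_{i-1}<j\le k_1+\dots+k_i\}$. $\Pi_{k_1,\dots,k_m}$ denotes the set of all partitions $\sigma$ of $[k]$ into disjoint nonempty blocks such that every block of $\sigma$ meets each $J_i$ in at most one element. *)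

theory Defs
  imports Complex_Main "HOL-Library.Disjoint_Sets"
begin

definition Jblock :: "(nat \<Rightarrow> nat) \<Rightarrow> nat \<Rightarrow> nat set" where
  "Jblock k i = {j. (\<Sum>l=1..<i. k l) < j \<and> j \<le> (\<Sum>l=1..i. k l)}"

definition PiK :: "nat \<Rightarrow> (nat \<Rightarrow> nat) \<Rightarrow> nat set set set" where
  "PiK m k = {\<sigma>. partition_on {1..(\<Sum>i=1..m. k i)} \<sigma> \<and>
                 (\<forall>B\<in>\<sigma>. \<forall>i\<in>{1..m}. card (B \<inter> Jblock k i) \<le> 1)}"

definition Acoef :: "nat \<Rightarrow> (nat \<Rightarrow> nat) \<Rightarrow> (nat \<Rightarrow> nat) \<Rightarrow> real" where
  "Acoef m k j = (\<Prod>l=2..m. real (k l choose j l) *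
      fact (k 1 + (\<Sum>i=2..<l. j i)) / fact (k 1 + (\<Sum>i=2..l. j i) - k l))"

end

theory Submission
  imports Defs "HOL-Library.FuncSet"
begin

lemma part_uniq:
  assumes "partition_on P \<tau>" "Z1 \<in> \<tau>" "Z2 \<in> \<tau>" "x \<in> Z1" "x \<in> Z2"
  shows "Z1 = Z2"
  using assms unfolding partition_on_def disjoint_def by blast

definition extP :: "'a set \<Rightarrow> 'a set set \<Rightarrow> 'a set \<Rightarrow> ('a \<Rightarrow> 'a set) \<Rightarrow> 'a set set" where
  "extP B \<sigma> B' g = (\<lambda>X. X \<union> {y\<in>B'. g y = X}) ` \<sigma> \<union> (\<lambda>y. {y}) ` (B - B')"

definition EE :: "'a set \<Rightarrow> 'a set \<Rightarrow> 'a set set \<Rightarrow> 'a set set set" where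
  "EE A B \<sigma> = {\<tau>. partition_on (A \<union> B) \<tau> \<and> (\<forall>Z\<in>\<tau>. card (Z \<inter> B) \<le> 1) \<and> (\<inter>) A ` \<tau> - {{}} = \<sigma>}"

definition TT :: "'a set \<Rightarrow> 'a set set \<Rightarrow> ('a set \<times> ('a \<Rightarrow> 'a set)) set" where
  "TT B \<sigma> = Sigma (Pow B) (\<lambda>B'. {g \<in> B' \<rightarrow>\<^sub>E \<sigma>. inj_on g B'})"

definition invP :: "'a set \<Rightarrow> 'a set \<Rightarrow> 'a set set \<Rightarrow> 'a set \<times> ('a \<Rightarrow> 'a set)" where
  "invP A B \<tau> = ({y\<in>B. {y} \<notin> \<tau>}, restrict (\<lambda>y. A \<inter> (THE Z. Z \<in> \<tau> \<and> y \<in> Z)) {y\<in>B. {y} \<notin> \<tau>})"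

definition ffn :: "nat \<Rightarrow> nat \<Rightarrow> nat" where
  "ffn n s = prod ((-) n) {0..<s}"

lemma sum_Pow_card:
  fixes F :: "nat \<Rightarrow> real"
  assumes fB: "finite B"
  shows "(\<Sum>B'\<in>Pow B. F (card B')) = (\<Sum>s=0..card B. real (card B choose s) * F s)"
proof -
  have P: "Pow B = (\<Union>s\<in>{0..card B}. {B'. B' \<subseteq> B \<and> card B' = s})"
    using card_mono[OF fB] by auto
  have "(\<Sum>B'\<in>Pow B. F (card B')) = (\<Sum>s\<in>{0..card B}. \<Sum>B'\<in>{B'. B' \<subseteq> B \<and> card B' = s}. F (card B'))"
    unfolding P by (rule sum.UNION_disjoint) (use fB in \<open>auto intro: finite_subset\<close>)
  also have "\<dots> = (\<Sum>s=0..card B. real (card B choose s) * F s)"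
  proof (rule sum.cong[OF refl])
    fix s
    have "(\<Sum>B'\<in>{B'. B' \<subseteq> B \<and> card B' = s}. F (card B')) = (\<Sum>B'\<in>{B'. B' \<subseteq> B \<and> card B' = s}. F s)"
      by (rule sum.cong) auto
    also have "\<dots> = real (card B choose s) * F s" using n_subsets[OF fB, of s] by simp
    finally show "(\<Sum>B'\<in>{B'. B' \<subseteq> B \<and> card B' = s}. F (card B')) = real (card B choose s) * F s" .
  qed
  finally show ?thesis .
qed

definition blk :: "'a set set \<Rightarrow> 'a \<Rightarrow> 'a set" where
  "blk \<tau> y = (THE Z. Z \<in> \<tau> \<and> y \<in> Z)"

lemma blk:
  assumes "partition_on P \<tau>" "y \<in> P"
  shows "blk \<tau> y \<in> \<tau>" "y \<in> blk \<tau> y"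
proof -
  have "\<exists>!Z. Z \<in> \<tau> \<and> y \<in> Z"
    using assms part_uniq[OF assms(1)] unfolding partition_on_def by blast
  then have "blk \<tau> y \<in> \<tau> \<and> y \<in> blk \<tau> y" unfolding blk_def by (rule theI')
  then show "blk \<tau> y \<in> \<tau>" "y \<in> blk \<tau> y" by auto
qed

lemma blk_eq:
  assumes "partition_on P \<tau>" "Z \<in> \<tau>" "y \<in> Z"
  shows "blk \<tau> y = Z"
proof -
  have yP: "y \<in> P" using assms unfolding partition_on_def by blast
  show ?thesis using blk[OF assms(1) yP] part_uniq[OF assms(1)] assms by blast
qed

lemma card_le1_eq: "finite S \<Longrightarrow> card S \<le> 1 \<Longrightarrow> x \<in> S \<Longrightarrow> y \<in> S \<Longrightarrow> x = y"
  using card_le_Suc0_iff_eq[of S] by simp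

context
  fixes A B :: "'a set" and \<sigma> :: "'a set set"
  assumes finA: "finite A" and finB: "finite B" and disj: "A \<inter> B = {}"
    and part: "partition_on A \<sigma>"
begin

lemma sig_ne: "X \<in> \<sigma> \<Longrightarrow> X \<noteq> {}" using part unfolding partition_on_def by auto
lemma sig_sub: "X \<in> \<sigma> \<Longrightarrow> X \<subseteq> A" using part unfolding partition_on_def by auto

lemma ext_in_E:
  assumes "B' \<subseteq> B" "g \<in> B' \<rightarrow>\<^sub>E \<sigma>" "inj_on g B'"
  shows "extP B \<sigma> B' g \<in> EE A B \<sigma>"
proof -
  let ?G = "\<lambda>X. {y\<in>B'. g y = X}"
  have G1: "card (?G X) \<le> 1" for X
  proof -
    have "\<forall>y\<in>?G X. \<forall>z\<in>?G X. y = z" using assms(3) by (auto dest: inj_onD)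
    moreover have "finite (?G X)" using assms(1) finB by (auto intro: finite_subset)
    ultimately show ?thesis using card_le_Suc0_iff_eq[of "?G X"] by simp
  qed
  have un: "\<Union> (extP B \<sigma> B' g) = A \<union> B"
  proof
    show "\<Union> (extP B \<sigma> B' g) \<subseteq> A \<union> B" unfolding extP_def using sig_sub assms(1) by blast
    show "A \<union> B \<subseteq> \<Union> (extP B \<sigma> B' g)"
    proof
      fix x assume x: "x \<in> A \<union> B"
      show "x \<in> \<Union> (extP B \<sigma> B' g)"
      proof (cases "x \<in> A")
        case True
        then obtain X where "X \<in> \<sigma>" "x \<in> X" using part unfolding partition_on_def by blast
        then show ?thesis unfolding extP_def by blast
      next
        case False
        then have xB: "x \<in> B" using x by blast
        show ?thesis
        proof (cases "x \<in> B'")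
          case True
          then have "g x \<in> \<sigma>" using assms(2) by blast
          then show ?thesis unfolding extP_def using True by blast
        next
          case False then show ?thesis unfolding extP_def using xB by blast
        qed
      qed
    qed
  qed
  have dj: "disjoint (extP B \<sigma> B' g)"
    unfolding disjoint_def extP_def
  proof (intro ballI impI)
    fix P Q assume P: "P \<in> (\<lambda>X. X \<union> ?G X) ` \<sigma> \<union> (\<lambda>y. {y}) ` (B - B')"
      and Q: "Q \<in> (\<lambda>X. X \<union> ?G X) ` \<sigma> \<union> (\<lambda>y. {y}) ` (B - B')" and ne: "P \<noteq> Q"
    have djs: "X \<in> \<sigma> \<Longrightarrow> Y \<in> \<sigma> \<Longrightarrow> X \<noteq> Y \<Longrightarrow> X \<inter> Y = {}" for X Y
      using part unfolding partition_on_def disjoint_def by blast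
    from P show "P \<inter> Q = {}"
    proof
      assume "P \<in> (\<lambda>X. X \<union> ?G X) ` \<sigma>"
      then obtain X where X: "X \<in> \<sigma>" "P = X \<union> ?G X" by blast
      from Q show ?thesis
      proof
        assume "Q \<in> (\<lambda>X. X \<union> ?G X) ` \<sigma>"
        then obtain Y where Y: "Y \<in> \<sigma>" "Q = Y \<union> ?G Y" by blast
        have "X \<noteq> Y" using X Y ne by blast
        then have "X \<inter> Y = {}" using djs X Y by blast
        moreover have "X \<inter> ?G Y = {}" "?G X \<inter> Y = {}" "?G X \<inter> ?G Y = {}"
          using sig_sub[OF X(1)] sig_sub[OF Y(1)] disj assms(1) \<open>X \<noteq> Y\<close> by auto
        ultimately show ?thesis using X Y by blast
      next
        assume "Q \<in> (\<lambda>y. {y}) ` (B - B')"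
        then obtain y where "y \<in> B - B'" "Q = {y}" by blast
        then show ?thesis using X sig_sub[OF X(1)] disj by blast
      qed
    next
      assume "P \<in> (\<lambda>y. {y}) ` (B - B')"
      then obtain y where y: "y \<in> B - B'" "P = {y}" by blast
      from Q show ?thesis
      proof
        assume "Q \<in> (\<lambda>X. X \<union> ?G X) ` \<sigma>"
        then obtain Y where Y: "Y \<in> \<sigma>" "Q = Y \<union> ?G Y" by blast
        then show ?thesis using y sig_sub[OF Y(1)] disj by blast
      next
        assume "Q \<in> (\<lambda>y. {y}) ` (B - B')"
        then show ?thesis using y ne by blast
      qed
    qed
  qed
  have nemp: "{} \<notin> extP B \<sigma> B' g" using sig_ne unfolding extP_def by auto
  have cB: "\<forall>Z\<in>extP B \<sigma> B' g. card (Z \<inter> B) \<le> 1"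
  proof
    fix Z assume "Z \<in> extP B \<sigma> B' g"
    then consider X where "X \<in> \<sigma>" "Z = X \<union> ?G X" | y where "y \<in> B - B'" "Z = {y}"
      unfolding extP_def by blast
    then show "card (Z \<inter> B) \<le> 1"
    proof cases
      case 1
      then have "Z \<inter> B = ?G X" using sig_sub disj assms(1) by blast
      then show ?thesis using G1 by simp
    next
      case 2 then show ?thesis by simp
    qed
  qed
  have res: "(\<inter>) A ` extP B \<sigma> B' g - {{}} = \<sigma>"
  proof -
    have a: "A \<inter> (X \<union> ?G X) = X" if "X \<in> \<sigma>" for X using sig_sub[OF that] disj assms(1) by blast
    have b: "A \<inter> {y} = {}" if "y \<in> B" for y using disj that by blast
    show ?thesis unfolding extP_def image_Un using a b sig_ne by (auto simp: image_image)
  qed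
  show ?thesis unfolding EE_def partition_on_def using un dj nemp cB res by blast
qed


context
  fixes \<tau> assumes tE: "\<tau> \<in> EE A B \<sigma>"
begin

lemma tpart: "partition_on (A \<union> B) \<tau>" using tE unfolding EE_def by blast
lemma tcard: "Z \<in> \<tau> \<Longrightarrow> card (Z \<inter> B) \<le> 1" using tE unfolding EE_def by blast
lemma tres: "(\<inter>) A ` \<tau> - {{}} = \<sigma>" using tE unfolding EE_def by blast
lemma tsub: "Z \<in> \<tau> \<Longrightarrow> Z \<subseteq> A \<union> B" using tpart unfolding partition_on_def by blast
lemma tne: "Z \<in> \<tau> \<Longrightarrow> Z \<noteq> {}" using tpart unfolding partition_on_def by blast

lemma e1:
  assumes "Z \<in> \<tau>" "A \<inter> Z = {}"
  obtains y where "y \<in> B" "Z = {y}"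
proof -
  have ZB: "Z \<subseteq> B" using tsub[OF assms(1)] assms(2) by blast
  obtain y where y: "y \<in> Z" using tne[OF assms(1)] by blast
  have "Z = {y}"
  proof
    show "Z \<subseteq> {y}"
    proof
      fix z assume "z \<in> Z"
      then show "z \<in> {y}" using card_le1_eq[of "Z \<inter> B" z y] tcard[OF assms(1)] ZB y finB
        by (auto intro: finite_subset)
    qed
  qed (use y in blast)
  then show ?thesis using that y ZB by blast
qed

lemma e2: "Z \<in> \<tau> \<Longrightarrow> A \<inter> Z \<noteq> {} \<Longrightarrow> A \<inter> Z \<in> \<sigma>"
  using tres by blast

lemma e3: "X \<in> \<sigma> \<Longrightarrow> \<exists>Z\<in>\<tau>. X = A \<inter> Z"
  using tres by blast

abbreviation "B2 \<equiv> {y\<in>B. {y} \<notin> \<tau>}"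
abbreviation "g2 \<equiv> restrict (\<lambda>y. A \<inter> blk \<tau> y) B2"

lemma inv_eq: "invP A B \<tau> = (B2, g2)"
  unfolding invP_def blk_def by simp

lemma B2_nonA: "y \<in> B2 \<Longrightarrow> A \<inter> blk \<tau> y \<noteq> {}"
proof
  assume y: "y \<in> B2" and e: "A \<inter> blk \<tau> y = {}"
  have yU: "y \<in> A \<union> B" using y by blast
  obtain y' where "y' \<in> B" "blk \<tau> y = {y'}" using e1[OF blk(1)[OF tpart yU] e] by blast
  then have "blk \<tau> y = {y}" using blk(2)[OF tpart yU] by auto
  then show False using y blk(1)[OF tpart yU] by simp
qed

lemma g2_in: "g2 \<in> B2 \<rightarrow>\<^sub>E \<sigma>"
proof
  fix y assume y: "y \<in> B2"
  have yU: "y \<in> A \<union> B" using y by blast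
  show "g2 y \<in> \<sigma>" using e2[OF blk(1)[OF tpart yU] B2_nonA[OF y]] y by simp
qed auto

lemma g2_inj: "inj_on g2 B2"
proof
  fix y1 y2 assume y1: "y1 \<in> B2" and y2: "y2 \<in> B2" and eq: "g2 y1 = g2 y2"
  have yU: "y1 \<in> A \<union> B" "y2 \<in> A \<union> B" using y1 y2 by blast+
  have "A \<inter> blk \<tau> y1 = A \<inter> blk \<tau> y2" using eq y1 y2 by simp
  then obtain a where "a \<in> blk \<tau> y1" "a \<in> blk \<tau> y2" using B2_nonA[OF y1] by blast
  then have same: "blk \<tau> y1 = blk \<tau> y2"
    using part_uniq[OF tpart blk(1)[OF tpart yU(1)] blk(1)[OF tpart yU(2)]] by blast
  show "y1 = y2"
    using card_le1_eq[of "blk \<tau> y1 \<inter> B" y1 y2] tcard[OF blk(1)[OF tpart yU(1)]] finB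
      blk(2)[OF tpart yU(1)] blk(2)[OF tpart yU(2)] same y1 y2 by auto
qed

lemma inv_in_T: "invP A B \<tau> \<in> TT B \<sigma>"
  unfolding inv_eq TT_def using g2_in g2_inj by auto

lemma Z_decomp:
  assumes Z: "Z \<in> \<tau>" and ne: "A \<inter> Z \<noteq> {}"
  shows "Z = (A \<inter> Z) \<union> {y\<in>B2. g2 y = A \<inter> Z}"
proof
  show "Z \<subseteq> (A \<inter> Z) \<union> {y\<in>B2. g2 y = A \<inter> Z}"
  proof
    fix y assume yZ: "y \<in> Z"
    show "y \<in> (A \<inter> Z) \<union> {y\<in>B2. g2 y = A \<inter> Z}"
    proof (cases "y \<in> A")
      case True then show ?thesis using yZ by blast
    next
      case False
      then have yB: "y \<in> B" using tsub[OF Z] yZ by blast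
      have "{y} \<notin> \<tau>"
      proof
        assume yt: "{y} \<in> \<tau>"
        have "{y} = Z" using part_uniq[OF tpart yt Z, of y] yZ by blast
        then show False using ne False by blast
      qed
      then have yB2: "y \<in> B2" using yB by blast
      have "blk \<tau> y = Z" using blk_eq[OF tpart Z yZ] .
      then show ?thesis using yB2 by simp
    qed
  qed
next
  show "(A \<inter> Z) \<union> {y\<in>B2. g2 y = A \<inter> Z} \<subseteq> Z"
  proof
    fix y assume y: "y \<in> (A \<inter> Z) \<union> {y\<in>B2. g2 y = A \<inter> Z}"
    show "y \<in> Z"
    proof (cases "y \<in> A \<inter> Z")
      case True then show ?thesis by blast
    next
      case False
      then have yB2: "y \<in> B2" and g2y: "g2 y = A \<inter> Z" using y by blast+
      then have eq: "A \<inter> blk \<tau> y = A \<inter> Z" by simp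
      have yU: "y \<in> A \<union> B" using yB2 by blast
      obtain a where aZ: "a \<in> A \<inter> Z" using ne by blast
      then have "a \<in> A \<inter> blk \<tau> y" unfolding eq .
      then have "a \<in> blk \<tau> y" "a \<in> Z" using aZ by blast+
      then have "blk \<tau> y = Z" using part_uniq[OF tpart blk(1)[OF tpart yU] Z] by blast
      then show ?thesis using blk(2)[OF tpart yU] by simp
    qed
  qed
qed

lemma ext_inv: "extP B \<sigma> B2 g2 = \<tau>"
proof
  show "extP B \<sigma> B2 g2 \<subseteq> \<tau>"
  proof
    fix W assume "W \<in> extP B \<sigma> B2 g2"
    then consider X where "X \<in> \<sigma>" "W = X \<union> {y\<in>B2. g2 y = X}" | y where "y \<in> B - B2" "W = {y}"
      unfolding extP_def by blast
    then show "W \<in> \<tau>"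
    proof cases
      case 1
      obtain Z where Z: "Z \<in> \<tau>" "X = A \<inter> Z" using e3[OF 1(1)] by blast
      have ne: "A \<inter> Z \<noteq> {}" using sig_ne[OF 1(1)] Z by simp
      from Z_decomp[OF Z(1) ne] have "Z = X \<union> {y\<in>B2. g2 y = X}" by (simp only: Z(2)[symmetric])
      then have "Z = W" using 1(2) by (simp only:)
      then show ?thesis using Z by simp
    next
      case 2 then show ?thesis by simp
    qed
  qed
next
  show "\<tau> \<subseteq> extP B \<sigma> B2 g2"
  proof
    fix Z assume Z: "Z \<in> \<tau>"
    show "Z \<in> extP B \<sigma> B2 g2"
    proof (cases "A \<inter> Z = {}")
      case True
      then obtain y where "y \<in> B" "Z = {y}" using e1[OF Z] by blast
      then show ?thesis using Z unfolding extP_def by blast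
    next
      case False
      have "A \<inter> Z \<in> \<sigma>" using e2[OF Z False] .
      moreover have "Z = (A \<inter> Z) \<union> {y\<in>B2. g2 y = A \<inter> Z}" using Z_decomp[OF Z False] .
      ultimately show ?thesis unfolding extP_def by blast
    qed
  qed
qed

end


lemma inv_ext:
  assumes T: "(B', g) \<in> TT B \<sigma>"
  shows "invP A B (extP B \<sigma> B' g) = (B', g)"
proof -
  have B'B: "B' \<subseteq> B" and gin: "g \<in> B' \<rightarrow>\<^sub>E \<sigma>" and ginj: "inj_on g B'"
    using T unfolding TT_def by auto
  define \<tau> where "\<tau> = extP B \<sigma> B' g"
  have tE: "\<tau> \<in> EE A B \<sigma>" unfolding \<tau>_def by (rule ext_in_E[OF B'B gin ginj])
  have tp: "partition_on (A \<union> B) \<tau>" using tE unfolding EE_def by blast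
  have B2: "{y\<in>B. {y} \<notin> \<tau>} = B'"
  proof
    show "{y\<in>B. {y} \<notin> \<tau>} \<subseteq> B'" unfolding \<tau>_def extP_def by blast
    show "B' \<subseteq> {y\<in>B. {y} \<notin> \<tau>}"
    proof
      fix y assume y: "y \<in> B'"
      have "{y} \<notin> \<tau>"
      proof
        assume "{y} \<in> \<tau>"
        then consider X where "X \<in> \<sigma>" "{y} = X \<union> {y\<in>B'. g y = X}" | y' where "y' \<in> B - B'" "{y} = {y'}"
          unfolding \<tau>_def extP_def by blast
        then show False
        proof cases
          case 1
          then have "X \<subseteq> {y}" by blast
          moreover have "X \<noteq> {}" "X \<subseteq> A" using sig_ne sig_sub 1(1) by auto
          ultimately show False using y B'B disj by blast
        next
          case 2 then show False using y by blast
        qed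
      qed
      then show "y \<in> {y\<in>B. {y} \<notin> \<tau>}" using y B'B by blast
    qed
  qed
  have g2: "restrict (\<lambda>y. A \<inter> blk \<tau> y) B' = g"
  proof (rule ext)
    fix y show "restrict (\<lambda>y. A \<inter> blk \<tau> y) B' y = g y"
    proof (cases "y \<in> B'")
      case True
      have gy: "g y \<in> \<sigma>" using PiE_mem[OF gin True] .
      have Zt: "g y \<union> {z\<in>B'. g z = g y} \<in> \<tau>" unfolding \<tau>_def extP_def using gy by blast
      have yZ: "y \<in> g y \<union> {z\<in>B'. g z = g y}" using True by blast
      have "restrict (\<lambda>y. A \<inter> blk \<tau> y) B' y = A \<inter> blk \<tau> y" using True by simp
      also have "blk \<tau> y = g y \<union> {z\<in>B'. g z = g y}" by (rule blk_eq[OF tp Zt yZ])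
      also have "A \<inter> (g y \<union> {z\<in>B'. g z = g y}) = g y" using sig_sub[OF gy] B'B disj by blast
      finally show ?thesis .
    next
      case False then show ?thesis using PiE_arb[OF gin False] by simp
    qed
  qed
  show ?thesis using inv_eq[OF tE] B2 g2 unfolding \<tau>_def by simp
qed

lemma card_ext:
  assumes T: "(B', g) \<in> TT B \<sigma>"
  shows "card (extP B \<sigma> B' g) = card \<sigma> + (card B - card B')"
proof -
  have B'B: "B' \<subseteq> B" using T unfolding TT_def by auto
  have fs: "finite \<sigma>" using finite_elements[OF finA part] .
  let ?I1 = "(\<lambda>X. X \<union> {y\<in>B'. g y = X}) ` \<sigma>" and ?I2 = "(\<lambda>y. {y}) ` (B - B')"
  have inj1: "inj_on (\<lambda>X. X \<union> {y\<in>B'. g y = X}) \<sigma>"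
  proof
    fix X Y assume X: "X \<in> \<sigma>" and Y: "Y \<in> \<sigma>" and eq: "X \<union> {y\<in>B'. g y = X} = Y \<union> {y\<in>B'. g y = Y}"
    have "X = A \<inter> (X \<union> {y\<in>B'. g y = X})" using sig_sub[OF X] B'B disj by blast
    also have "\<dots> = A \<inter> (Y \<union> {y\<in>B'. g y = Y})" using eq by (rule arg_cong)
    also have "\<dots> = Y" using sig_sub[OF Y] B'B disj by blast
    finally show "X = Y" .
  qed
  have nn: "X \<union> {y\<in>B'. g y = X} \<noteq> {y}" if "X \<in> \<sigma>" "y \<in> B" for X y
  proof
    assume "X \<union> {y\<in>B'. g y = X} = {y}"
    then have "X \<subseteq> {y}" by blast
    then show False using sig_ne[OF that(1)] sig_sub[OF that(1)] that(2) disj by blast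
  qed
  have dis: "?I1 \<inter> ?I2 = {}"
  proof (rule equals0I)
    fix W assume "W \<in> ?I1 \<inter> ?I2"
    then obtain X y where "X \<in> \<sigma>" "W = X \<union> {y\<in>B'. g y = X}" "y \<in> B - B'" "W = {y}" by blast
    then show False using nn by blast
  qed
  have "card (extP B \<sigma> B' g) = card ?I1 + card ?I2"
    unfolding extP_def
    by (rule card_Un_disjoint[OF finite_imageI[OF fs] finite_imageI[OF finite_Diff[OF finB]] dis])
  also have "card ?I1 = card \<sigma>" by (rule card_image[OF inj1])
  also have "card ?I2 = card (B - B')" by (rule card_image) (auto simp: inj_on_def)
  also have "card (B - B') = card B - card B'" using B'B finB by (simp add: card_Diff_subset finite_subset)
  finally show ?thesis .
qed

lemma bij_ext: "bij_betw (\<lambda>(B', g). extP B \<sigma> B' g) (TT B \<sigma>) (EE A B \<sigma>)"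
proof (rule bij_betw_byWitness[where f' = "invP A B"])
  show "\<forall>a\<in>TT B \<sigma>. invP A B ((\<lambda>(B', g). extP B \<sigma> B' g) a) = a"
    using inv_ext by auto
  show "\<forall>a'\<in>EE A B \<sigma>. (\<lambda>(B', g). extP B \<sigma> B' g) (invP A B a') = a'"
    using ext_inv inv_eq by auto
  show "(\<lambda>(B', g). extP B \<sigma> B' g) ` TT B \<sigma> \<subseteq> EE A B \<sigma>"
    using ext_in_E unfolding TT_def by auto
  show "invP A B ` EE A B \<sigma> \<subseteq> TT B \<sigma>"
    using inv_in_T by auto
qed


lemma sum_EE:
  fixes h :: "nat \<Rightarrow> real"
  shows "(\<Sum>\<tau>\<in>EE A B \<sigma>. h (card \<tau>)) =
    (\<Sum>s=0..card B. real (card B choose s) * real (ffn (card \<sigma>) s) * h (card \<sigma> + (card B - s)))"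
proof -
  have fs: "finite \<sigma>" using finite_elements[OF finA part] .
  let ?F = "\<lambda>B'. {g \<in> B' \<rightarrow>\<^sub>E \<sigma>. inj_on g B'}"
  have finF: "finite (?F B')" if "B' \<in> Pow B" for B'
  proof -
    have "finite B'" using that finB finite_subset by blast
    then have "finite (B' \<rightarrow>\<^sub>E \<sigma>)" using fs by (simp add: finite_PiE)
    then show ?thesis by (rule finite_subset[rotated]) blast
  qed
  have "(\<Sum>\<tau>\<in>EE A B \<sigma>. h (card \<tau>)) = (\<Sum>p\<in>TT B \<sigma>. h (card ((\<lambda>(B', g). extP B \<sigma> B' g) p)))"
    by (rule sum.reindex_bij_betw[OF bij_ext, symmetric])
  also have "\<dots> = (\<Sum>p\<in>TT B \<sigma>. h (card \<sigma> + (card B - card (fst p))))"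
    by (rule sum.cong) (auto simp: card_ext)
  also have "\<dots> = (\<Sum>B'\<in>Pow B. \<Sum>g\<in>?F B'. h (card \<sigma> + (card B - card B')))"
  proof -
    have "(\<Sum>B'\<in>Pow B. \<Sum>g\<in>?F B'. h (card \<sigma> + (card B - card B'))) =
      (\<Sum>(B', g)\<in>Sigma (Pow B) ?F. h (card \<sigma> + (card B - card B')))"
      by (rule sum.Sigma) (use finB finF in blast)+
    also have "\<dots> = (\<Sum>p\<in>TT B \<sigma>. h (card \<sigma> + (card B - card (fst p))))"
      unfolding TT_def by (rule sum.cong) auto
    finally show ?thesis by simp
  qed
  also have "\<dots> = (\<Sum>B'\<in>Pow B. real (ffn (card \<sigma>) (card B')) * h (card \<sigma> + (card B - card B')))"
  proof (rule sum.cong[OF refl])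
    fix B' assume "B' \<in> Pow B"
    then have "finite B'" using finB finite_subset by blast
    then have "card (?F B') = ffn (card \<sigma>) (card B')"
      using card_inj_on_subset_funcset[of B' \<sigma> B'] fs unfolding ffn_def by simp
    then show "(\<Sum>g\<in>?F B'. h (card \<sigma> + (card B - card B'))) = real (ffn (card \<sigma>) (card B')) * h (card \<sigma> + (card B - card B'))"
      by simp
  qed
  also have "\<dots> = (\<Sum>s=0..card B. real (card B choose s) * (real (ffn (card \<sigma>) s) * h (card \<sigma> + (card B - s))))"
    by (rule sum_Pow_card[OF finB])
  finally show ?thesis by (simp add: mult.assoc)
qed

end

lemma Jblock_Suc: "Jblock k (Suc m) = {(\<Sum>l=1..m. k l)<..(\<Sum>l=1..m. k l) + k (Suc m)}"
  unfolding Jblock_def atLeastLessThanSuc_atLeastAtMost by auto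

lemma Jblock_sub:
  assumes "1 \<le> i" "i \<le> m"
  shows "Jblock k i \<subseteq> {1..(\<Sum>l=1..m. k l)}"
proof
  fix j assume "j \<in> Jblock k i"
  then have j: "(\<Sum>l=1..<i. k l) < j" "j \<le> (\<Sum>l=1..i. k l)" unfolding Jblock_def by auto
  have "(\<Sum>l=1..i. k l) \<le> (\<Sum>l=1..m. k l)" by (rule sum_mono2) (use assms in auto)
  then show "j \<in> {1..(\<Sum>l=1..m. k l)}" using j by auto
qed

lemma PiK_fin: "finite (PiK m k)"
  unfolding PiK_def by (rule finite_subset[OF _ finitely_many_partition_on[of "{1..(\<Sum>i=1..m. k i)}"]]) auto

lemma PiK_Suc_eq:
  fixes m :: nat and k :: "nat \<Rightarrow> nat"
  defines "A \<equiv> {1..(\<Sum>l=1..m. k l)}" and "B \<equiv> Jblock k (Suc m)"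
  shows "PiK (Suc m) k = (\<Union>\<sigma>\<in>PiK m k. EE A B \<sigma>)"
proof -
  have AB: "{1..(\<Sum>i=1..Suc m. k i)} = A \<union> B" unfolding A_def B_def Jblock_Suc by auto
  have JA: "Jblock k i \<subseteq> A" if "1 \<le> i" "i \<le> m" for i unfolding A_def by (rule Jblock_sub[OF that])
  show ?thesis
  proof
    show "PiK (Suc m) k \<subseteq> (\<Union>\<sigma>\<in>PiK m k. EE A B \<sigma>)"
    proof
      fix \<tau> assume t: "\<tau> \<in> PiK (Suc m) k"
      then have tp: "partition_on (A \<union> B) \<tau>" and tc: "\<forall>Z\<in>\<tau>. \<forall>i\<in>{1..Suc m}. card (Z \<inter> Jblock k i) \<le> 1"
        unfolding PiK_def AB by auto
      define \<sigma> where "\<sigma> = (\<inter>) A ` \<tau> - {{}}"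
      have sp: "partition_on A \<sigma>" using partition_on_restrict[OF tp, of A]
        unfolding \<sigma>_def Int_absorb2[OF Un_upper1] .
      have sc: "\<forall>X\<in>\<sigma>. \<forall>i\<in>{1..m}. card (X \<inter> Jblock k i) \<le> 1"
      proof (intro ballI)
        fix X i assume X: "X \<in> \<sigma>" and i: "i \<in> {1..m}"
        obtain Z where Z: "Z \<in> \<tau>" "X = A \<inter> Z" using X unfolding \<sigma>_def by blast
        have JAi: "Jblock k i \<subseteq> A" using i by (intro JA) auto
        have "X \<inter> Jblock k i = Z \<inter> Jblock k i" using JAi Z(2) by blast
        moreover have "i \<in> {1..Suc m}" using i by simp
        then have "card (Z \<inter> Jblock k i) \<le> 1" using tc Z(1) by blast
        ultimately show "card (X \<inter> Jblock k i) \<le> 1" by simp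
      qed
      have "\<sigma> \<in> PiK m k" unfolding PiK_def using sp sc unfolding A_def by blast
      have tB: "\<forall>Z\<in>\<tau>. card (Z \<inter> B) \<le> 1"
      proof
        fix Z assume "Z \<in> \<tau>"
        moreover have "Suc m \<in> {1..Suc m}" by simp
        ultimately show "card (Z \<inter> B) \<le> 1" using tc unfolding B_def by blast
      qed
      have "\<tau> \<in> EE A B \<sigma>" unfolding EE_def mem_Collect_eq using tp tB \<sigma>_def by blast
      moreover note \<open>\<sigma> \<in> PiK m k\<close>
      ultimately show "\<tau> \<in> (\<Union>\<sigma>\<in>PiK m k. EE A B \<sigma>)" by blast
    qed
  next
    show "(\<Union>\<sigma>\<in>PiK m k. EE A B \<sigma>) \<subseteq> PiK (Suc m) k"
    proof
      fix \<tau> assume "\<tau> \<in> (\<Union>\<sigma>\<in>PiK m k. EE A B \<sigma>)"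
      then obtain \<sigma> where s: "\<sigma> \<in> PiK m k" and t: "\<tau> \<in> EE A B \<sigma>" by blast
      have sc: "\<forall>X\<in>\<sigma>. \<forall>i\<in>{1..m}. card (X \<inter> Jblock k i) \<le> 1" using s unfolding PiK_def by blast
      have tp: "partition_on (A \<union> B) \<tau>" and tB: "\<forall>Z\<in>\<tau>. card (Z \<inter> B) \<le> 1"
        and tr: "(\<inter>) A ` \<tau> - {{}} = \<sigma>" using t unfolding EE_def by auto
      have "\<forall>Z\<in>\<tau>. \<forall>i\<in>{1..Suc m}. card (Z \<inter> Jblock k i) \<le> 1"
      proof (intro ballI)
        fix Z i assume Z: "Z \<in> \<tau>" and i: "i \<in> {1..Suc m}"
        show "card (Z \<inter> Jblock k i) \<le> 1"
        proof (cases "i = Suc m")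
          case True then show ?thesis using tB Z unfolding B_def by simp
        next
          case False
          then have i': "i \<in> {1..m}" using i by auto
          have eq: "Z \<inter> Jblock k i = (A \<inter> Z) \<inter> Jblock k i" using JA[of i] i' by auto
          show ?thesis
          proof (cases "A \<inter> Z = {}")
            case True then show ?thesis unfolding eq by simp
          next
            case False
            then have "A \<inter> Z \<in> \<sigma>" using tr Z by blast
            then show ?thesis unfolding eq using sc i' by blast
          qed
        qed
      qed
      then show "\<tau> \<in> PiK (Suc m) k" unfolding PiK_def AB using tp by blast
    qed
  qed
qed

lemma G_step:
  fixes h :: "nat \<Rightarrow> real"
  shows "(\<Sum>\<tau>\<in>PiK (Suc m) k. h (card \<tau>)) =
    (\<Sum>\<sigma>\<in>PiK m k. \<Sum>s=0..k (Suc m). real (k (Suc m) choose s) * real (ffn (card \<sigma>) s) * h (card \<sigma> + (k (Suc m) - s)))"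
proof -
  define A where "A = {1..(\<Sum>l=1..m. k l)}"
  define B where "B = Jblock k (Suc m)"
  have finA: "finite A" and finB: "finite B" and disj: "A \<inter> B = {}"
    unfolding A_def B_def Jblock_Suc by auto
  have cB: "card B = k (Suc m)" unfolding B_def Jblock_Suc by simp
  have finE: "finite (EE A B \<sigma>)" for \<sigma>
    unfolding EE_def by (rule finite_subset[OF _ finitely_many_partition_on[of "A \<union> B"]]) (use finA finB in auto)
  have "(\<Sum>\<tau>\<in>PiK (Suc m) k. h (card \<tau>)) = (\<Sum>\<sigma>\<in>PiK m k. \<Sum>\<tau>\<in>EE A B \<sigma>. h (card \<tau>))"
    unfolding PiK_Suc_eq[of m k, folded A_def B_def]
  proof (rule sum.UNION_disjoint)
    show "finite (PiK m k)" by (rule PiK_fin)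
    show "\<forall>\<sigma>\<in>PiK m k. finite (EE A B \<sigma>)" using finE by blast
    show "\<forall>\<sigma>1\<in>PiK m k. \<forall>\<sigma>2\<in>PiK m k. \<sigma>1 \<noteq> \<sigma>2 \<longrightarrow> EE A B \<sigma>1 \<inter> EE A B \<sigma>2 = {}"
    proof (intro ballI impI)
      fix \<sigma>1 \<sigma>2 :: "nat set set" assume "\<sigma>1 \<in> PiK m k" "\<sigma>2 \<in> PiK m k" and ne: "\<sigma>1 \<noteq> \<sigma>2"
      show "EE A B \<sigma>1 \<inter> EE A B \<sigma>2 = {}"
      proof (rule equals0I)
        fix \<tau> assume "\<tau> \<in> EE A B \<sigma>1 \<inter> EE A B \<sigma>2"
        then have "(\<inter>) A ` \<tau> - {{}} = \<sigma>1" "(\<inter>) A ` \<tau> - {{}} = \<sigma>2" unfolding EE_def by auto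
        then show False using ne by simp
      qed
    qed
  qed
  also have "\<dots> = (\<Sum>\<sigma>\<in>PiK m k. \<Sum>s=0..k (Suc m). real (k (Suc m) choose s) * real (ffn (card \<sigma>) s) * h (card \<sigma> + (k (Suc m) - s)))"
  proof (rule sum.cong[OF refl])
    fix \<sigma> assume "\<sigma> \<in> PiK m k"
    then have sp: "partition_on A \<sigma>" unfolding PiK_def A_def by blast
    show "(\<Sum>\<tau>\<in>EE A B \<sigma>. h (card \<tau>)) = (\<Sum>s=0..k (Suc m). real (k (Suc m) choose s) * real (ffn (card \<sigma>) s) * h (card \<sigma> + (k (Suc m) - s)))"
      using sum_EE[OF finA finB disj sp, of h] unfolding cB .
  qed
  finally show ?thesis .
qed


lemma fact_ffn: "s \<le> n \<Longrightarrow> (fact n :: real) = fact (n - s) * real (ffn n s)"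
proof (induction s)
  case 0 then show ?case by (simp add: ffn_def)
next
  case (Suc s)
  have ns: "n - s = Suc (n - Suc s)" using Suc.prems by simp
  have "(fact n :: real) = fact (n - s) * real (ffn n s)" using Suc by simp
  also have "fact (n - s) = (fact (n - Suc s) :: real) * real (n - s)"
    unfolding ns fact_Suc by simp
  also have "real (ffn n (Suc s)) = real (ffn n s) * real (n - s)"
    unfolding ffn_def by simp
  ultimately show ?case by (simp add: algebra_simps)
qed

lemma ffn0: "ffn 0 s = (if s = 0 then 1 else 0)"
  unfolding ffn_def by (cases s) auto

lemma PiK0: "PiK 0 k = {{}}"
  unfolding PiK_def by (auto simp: partition_on_empty)

lemma base1:
  fixes h :: "nat \<Rightarrow> real"
  shows "(\<Sum>\<tau>\<in>PiK (Suc 0) k. h (card \<tau>)) = h (k 1)"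
proof -
  have "(\<Sum>\<tau>\<in>PiK (Suc 0) k. h (card \<tau>)) =
    (\<Sum>s=0..k (Suc 0). real (k (Suc 0) choose s) * real (ffn 0 s) * h (0 + (k (Suc 0) - s)))"
    using G_step[where m=0 and k=k and h=h] by (simp add: PiK0)
  also have "\<dots> = (\<Sum>s=0..k (Suc 0). if s = 0 then h (k 1) else 0)"
    by (rule sum.cong) (auto simp: ffn0)
  also have "\<dots> = h (k 1)" by (simp add: sum.delta)
  finally show ?thesis .
qed

lemma Acoef_Suc:
  assumes m: "1 \<le> m" and t: "t \<le> k (Suc m)" and b: "k (Suc m) \<le> k 1"
  shows "Acoef (Suc m) k (j(Suc m := t)) =
    Acoef m k j * (real (k (Suc m) choose t) * real (ffn (k 1 + (\<Sum>i=2..m. j i)) (k (Suc m) - t)))"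
proof -
  let ?j = "j(Suc m := t)"
  let ?T = "\<lambda>j l. real (k l choose j l) * fact (k 1 + (\<Sum>i=2..<l. j i)) / fact (k 1 + (\<Sum>i=2..l. j i) - k l)"
  define N where "N = k 1 + (\<Sum>i=2..m. j i)"
  have P: "(\<Prod>l=2..Suc m. ?T ?j l) = (\<Prod>l=2..m. ?T ?j l) * ?T ?j (Suc m)"
    using m by simp
  have P2: "(\<Prod>l=2..m. ?T ?j l) = (\<Prod>l=2..m. ?T j l)"
  proof (rule prod.cong[OF refl])
    fix l assume l: "l \<in> {2..m}"
    have "(\<Sum>i=2..<l. ?j i) = (\<Sum>i=2..<l. j i)" by (rule sum.cong) (use l in auto)
    moreover have "(\<Sum>i=2..l. ?j i) = (\<Sum>i=2..l. j i)" by (rule sum.cong) (use l in auto)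
    moreover have "?j l = j l" using l by auto
    ultimately show "?T ?j l = ?T j l" by simp
  qed
  have S1: "(\<Sum>i=2..<Suc m. ?j i) = (\<Sum>i=2..m. j i)"
    unfolding atLeastLessThanSuc_atLeastAtMost by (rule sum.cong) auto
  have S2: "(\<Sum>i=2..Suc m. ?j i) = (\<Sum>i=2..m. j i) + t"
  proof -
    have "(\<Sum>i=2..Suc m. ?j i) = (\<Sum>i=2..m. ?j i) + t" using m by simp
    also have "(\<Sum>i=2..m. ?j i) = (\<Sum>i=2..m. j i)" by (rule sum.cong) auto
    finally show ?thesis .
  qed
  have bN: "k (Suc m) \<le> N" using b unfolding N_def by simp
  have idx: "k 1 + ((\<Sum>i=2..m. j i) + t) - k (Suc m) = N - (k (Suc m) - t)"
    using t bN unfolding N_def by simp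
  have F: "(fact N :: real) / fact (N - (k (Suc m) - t)) = real (ffn N (k (Suc m) - t))"
    using fact_ffn[of "k (Suc m) - t" N] bN by simp
  have "?T ?j (Suc m) = real (k (Suc m) choose ?j (Suc m)) * fact N / fact (N - (k (Suc m) - t))"
    unfolding S1 S2 idx N_def by (rule refl)
  also have "\<dots> = real (k (Suc m) choose t) * ((fact N :: real) / fact (N - (k (Suc m) - t)))"
    by simp
  also have "\<dots> = real (k (Suc m) choose t) * real (ffn N (k (Suc m) - t))" unfolding F ..
  finally have T: "?T ?j (Suc m) = real (k (Suc m) choose t) * real (ffn N (k (Suc m) - t))" .
  have "Acoef (Suc m) k ?j = (\<Prod>l=2..Suc m. ?T ?j l)" unfolding Acoef_def ..
  also have "\<dots> = Acoef m k j * (real (k (Suc m) choose t) * real (ffn N (k (Suc m) - t)))"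
    unfolding P P2 T Acoef_def ..
  finally show ?thesis unfolding N_def .
qed


lemma main_ind:
  fixes h :: "nat \<Rightarrow> real"
  assumes "1 \<le> m" "\<forall>l\<in>{1..m}. k l \<le> k 1"
  shows "(\<Sum>j\<in>(\<Pi>\<^sub>E l\<in>{2..m}. {0..k l}). Acoef m k j * h (k 1 + (\<Sum>i=2..m. j i))) = (\<Sum>\<sigma>\<in>PiK m k. h (card \<sigma>))"
  using assms
proof (induction m arbitrary: h rule: nat_induct_at_least)
  case base
  have "(\<Sum>j\<in>(\<Pi>\<^sub>E l\<in>{2..1}. {0..k l}). Acoef 1 k j * h (k 1 + (\<Sum>i=2..1. j i))) = h (k 1)"
    by (simp add: Acoef_def)
  then show ?case using base1[of h k] by simp
next
  case (Suc m)
  let ?b = "k (Suc m)"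
  let ?N = "\<lambda>j. k 1 + (\<Sum>i=2..m. j i)"
  define g where "g n = (\<Sum>s=0..?b. real (?b choose s) * real (ffn n s) * h (n + (?b - s)))" for n
  have hyp: "\<forall>l\<in>{1..m}. k l \<le> k 1" using Suc.prems by auto
  have bk: "?b \<le> k 1" using Suc.prems by auto
  have R: "(\<Sum>\<sigma>\<in>PiK (Suc m) k. h (card \<sigma>)) = (\<Sum>j\<in>(\<Pi>\<^sub>E l\<in>{2..m}. {0..k l}). Acoef m k j * g (?N j))"
    unfolding G_step[where m=m and k=k and h=h] g_def[symmetric] using Suc.IH[OF hyp, of g] by simp
  have ins: "{2..Suc m} = insert (Suc m) {2..m}" using Suc.hyps by auto
  have nin: "Suc m \<notin> {2..m}" by simp
  let ?F = "\<lambda>j. Acoef (Suc m) k j * h (k 1 + (\<Sum>i=2..Suc m. j i))"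
  have "(\<Sum>j\<in>(\<Pi>\<^sub>E l\<in>{2..Suc m}. {0..k l}). ?F j)
      = (\<Sum>p\<in>{0..?b} \<times> (\<Pi>\<^sub>E l\<in>{2..m}. {0..k l}). ?F ((\<lambda>(y, g). g(Suc m := y)) p))"
  proof -
    have D: "(\<Pi>\<^sub>E l\<in>{2..Suc m}. {0..k l}) = (\<lambda>(y, g). g(Suc m := y)) ` ({0..?b} \<times> (\<Pi>\<^sub>E l\<in>{2..m}. {0..k l}))"
      unfolding ins by (rule PiE_insert_eq)
    show ?thesis
      by (rule sum.reindex_cong[OF inj_combinator[OF nin, where T="\<lambda>l. {0..k l}"] D]) simp
  qed
  also have "\<dots> = (\<Sum>p\<in>{0..?b} \<times> (\<Pi>\<^sub>E l\<in>{2..m}. {0..k l}).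
      Acoef m k (snd p) * (real (?b choose fst p) * real (ffn (?N (snd p)) (?b - fst p))) * h (?N (snd p) + fst p))"
  proof (rule sum.cong[OF refl])
    fix p assume p: "p \<in> {0..?b} \<times> (\<Pi>\<^sub>E l\<in>{2..m}. {0..k l})"
    obtain t j where pt: "p = (t, j)" by (cases p)
    have t: "t \<le> ?b" using p pt by auto
    have S: "(\<Sum>i=2..Suc m. (j(Suc m := t)) i) = (\<Sum>i=2..m. j i) + t"
    proof -
      have "(\<Sum>i=2..Suc m. (j(Suc m := t)) i) = (\<Sum>i=2..m. (j(Suc m := t)) i) + t" using Suc.hyps by simp
      also have "(\<Sum>i=2..m. (j(Suc m := t)) i) = (\<Sum>i=2..m. j i)" by (rule sum.cong) auto
      finally show ?thesis .
    qed
    show "?F ((\<lambda>(y, g). g(Suc m := y)) p) = Acoef m k (snd p) * (real (?b choose fst p) * real (ffn (?N (snd p)) (?b - fst p))) * h (?N (snd p) + fst p)"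
      unfolding pt using Acoef_Suc[OF Suc.hyps t bk, of j] S by (simp add: add.assoc)
  qed
  also have "\<dots> = (\<Sum>t\<in>{0..?b}. \<Sum>j\<in>(\<Pi>\<^sub>E l\<in>{2..m}. {0..k l}).
      Acoef m k j * (real (?b choose t) * real (ffn (?N j) (?b - t))) * h (?N j + t))"
    by (simp add: sum.cartesian_product split_def)
  also have "\<dots> = (\<Sum>j\<in>(\<Pi>\<^sub>E l\<in>{2..m}. {0..k l}). \<Sum>t\<in>{0..?b}.
      Acoef m k j * (real (?b choose t) * real (ffn (?N j) (?b - t))) * h (?N j + t))"
    by (rule sum.swap)
  also have "\<dots> = (\<Sum>j\<in>(\<Pi>\<^sub>E l\<in>{2..m}. {0..k l}). Acoef m k j * g (?N j))"
  proof (rule sum.cong[OF refl])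
    fix j
    have "g (?N j) = (\<Sum>s=0..?b. real (?b choose (?b + 0 - s)) * real (ffn (?N j) (?b + 0 - s)) * h (?N j + (?b - (?b + 0 - s))))"
      unfolding g_def by (rule sum.atLeastAtMost_rev)
    also have "\<dots> = (\<Sum>t=0..?b. real (?b choose t) * real (ffn (?N j) (?b - t)) * h (?N j + t))"
    proof (rule sum.cong[OF refl])
      fix t assume "t \<in> {0..?b}"
      then have t: "t \<le> ?b" by simp
      then have "?b - (?b - t) = t" by simp
      moreover have "?b choose (?b - t) = ?b choose t" using binomial_symmetric[OF t] by simp
      ultimately show "real (?b choose (?b + 0 - t)) * real (ffn (?N j) (?b + 0 - t)) * h (?N j + (?b - (?b + 0 - t))) =
          real (?b choose t) * real (ffn (?N j) (?b - t)) * h (?N j + t)" by simp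
    qed
    finally have "g (?N j) = (\<Sum>t=0..?b. real (?b choose t) * real (ffn (?N j) (?b - t)) * h (?N j + t))" .
    then show "(\<Sum>t\<in>{0..?b}. Acoef m k j * (real (?b choose t) * real (ffn (?N j) (?b - t))) * h (?N j + t)) = Acoef m k j * g (?N j)"
      by (simp add: sum_distrib_left mult.assoc)
  qed
  finally show ?case using R by simp
qed

theorem mainTheorem7:
  fixes m :: nat and k :: "nat \<Rightarrow> nat"
  assumes "1 \<le> m"
    and "\<forall>i l. 1 \<le> i \<and> i \<le> l \<and> l \<le> m \<longrightarrow> k l \<le> k i"
    and "1 \<le> k m"
  shows "(\<Sum>j\<in>(\<Pi>\<^sub>E l\<in>{2..m}. {0..k l}). Acoef m k j) = real (card (PiK m k))"
proof -
  have hyp: "\<forall>l\<in>{1..m}. k l \<le> k 1" using assms(2) by auto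
  have "(\<Sum>j\<in>(\<Pi>\<^sub>E l\<in>{2..m}. {0..k l}). Acoef m k j * (\<lambda>_. 1::real) (k 1 + (\<Sum>i=2..m. j i)))
     = (\<Sum>\<sigma>\<in>PiK m k. (\<lambda>_. 1::real) (card \<sigma>))" by (rule main_ind[OF assms(1) hyp])
  then show ?thesis by simp
qed


end
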